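(* A vector $v=(v_{i,j})\in E$ belongs to $Q_{\min}^\star$ if and only if $\sum_{(i,j)\in I}v_{i,j}=0$ and $\sum_{(i,j)\in I_s}v_{i,j}\le0$ for every $s\in\{1,\dots,d\}$. A vector $v\in E$ belongs to $Q_{\max}^\star$ if and only if $\sum_{(i,j)\in I}v_{i,j}=0$ and $\sum_{(i,j)\in J}v_{i,j}\le0$ for every admissible subset $J\subset I$.
   Context: Let $d\ge1$, $I=\{(i,j)\in\mathbb{Z}^2:1\le i\le j\le d\}$, $E=\mathbb{R}^I$ with scalar product $\langle v|w\rangle_E=\sum_{(i,j)\in I}v_{i,j}w_{i,j}$. $Q_{\max}\subset E$ is the cone of $q=(q_{i,j})$ with $q_{i,j}\ge q_{i,j+1}$ and $q_{i,j}\le q_{i+1,j+1}$ for all $1\le i\le j<d$; $Q_{\min}\subset E$ is the cone of $q$ with $q_{i,j}\ge q_{i,j+1}$ and $q_{i,j}=q_{i+1,j+1}$ for all $1\le i\le j<d$. For a cone $P\subset E$, $P^\star=\{v\in E:\langle v|x\rangle_E\ge0\ \forall x\in P\}$. A subset $J\subset I$ is admissible if for every $(i,j)\in J$, the pairs $(i,j+1)$ and $(i-1,j-1)$ belong to $J$ whenever they belong to $I$. For $s\in\{1,\dots,d\}$, $I_s=\{(i,j)\in I: j-i\ge d-s\}$. *)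

theory Defs
  imports Complex_Main
begin

definition idx :: "nat \<Rightarrow> (nat \<times> nat) set" where
  "idx d = {(i, j). 1 \<le> i \<and> i \<le> j \<and> j \<le> d}"

text \<open>E = R^I, represented as real functions on pairs vanishing outside I.\<close>
definition vecE :: "nat \<Rightarrow> (nat \<times> nat \<Rightarrow> real) set" where
  "vecE d = {v. \<forall>p. p \<notin> idx d \<longrightarrow> v p = 0}"

definition innerE :: "nat \<Rightarrow> (nat \<times> nat \<Rightarrow> real) \<Rightarrow> (nat \<times> nat \<Rightarrow> real) \<Rightarrow> real" where
  "innerE d v w = (\<Sum>p\<in>idx d. v p * w p)"

definition Qmax :: "nat \<Rightarrow> (nat \<times> nat \<Rightarrow> real) set" where
  "Qmax d = {q \<in> vecE d. \<forall>i j. 1 \<le> i \<and> i \<le> j \<and> j < d \<longrightarrow>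
      q (i, j) \<ge> q (i, j + 1) \<and> q (i, j) \<le> q (i + 1, j + 1)}"

definition Qmin :: "nat \<Rightarrow> (nat \<times> nat \<Rightarrow> real) set" where
  "Qmin d = {q \<in> vecE d. \<forall>i j. 1 \<le> i \<and> i \<le> j \<and> j < d \<longrightarrow>
      q (i, j) \<ge> q (i, j + 1) \<and> q (i, j) = q (i + 1, j + 1)}"

definition dual_cone :: "nat \<Rightarrow> (nat \<times> nat \<Rightarrow> real) set \<Rightarrow> (nat \<times> nat \<Rightarrow> real) set" where
  "dual_cone d P = {v \<in> vecE d. \<forall>x\<in>P. innerE d v x \<ge> 0}"

text \<open>Admissible subsets (indices start at 1, so (i-1,j-1) with i = 1 is never in I).\<close>
definition admissible :: "nat \<Rightarrow> (nat \<times> nat) set \<Rightarrow> bool" where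
  "admissible d J \<longleftrightarrow> J \<subseteq> idx d \<and>
     (\<forall>i j. (i, j) \<in> J \<longrightarrow>
        ((i, j + 1) \<in> idx d \<longrightarrow> (i, j + 1) \<in> J) \<and>
        (i \<ge> 1 \<and> j \<ge> 1 \<and> (i - 1, j - 1) \<in> idx d \<longrightarrow> (i - 1, j - 1) \<in> J))"

definition idx_s :: "nat \<Rightarrow> nat \<Rightarrow> (nat \<times> nat) set" where
  "idx_s d s = {(i, j) \<in> idx d. int j - int i \<ge> int d - int s}"

end

theory Submission
  imports Defs
begin

lemma layer_aux:
  fixes I :: "'a set" and v :: "'a \<Rightarrow> real"
  shows "finite I \<Longrightarrow> sum v I = 0 \<Longrightarrow> card (q ` I) = n \<Longrightarrow>
    (\<forall>t. sum v {p\<in>I. q p < t} \<le> 0) \<Longrightarrow> 0 \<le> (\<Sum>p\<in>I. v p * (q p :: real))"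
proof (induction n arbitrary: q rule: less_induct)
  case (less n q)
  show ?case
  proof (cases "card (q`I) \<le> 1")
    case True
    show ?thesis
    proof (cases "I = {}")
      case True then show ?thesis by simp
    next
      case False
      then obtain p0 where p0: "p0 \<in> I" by auto
      have fin: "finite (q ` I)" using less.prems by auto
      have "card (q ` I) \<le> Suc 0" using True by simp
      then have "\<forall>x\<in>q ` I. \<forall>y\<in>q ` I. x = y"
        using card_le_Suc0_iff_eq[OF fin] by blast
      then have "\<forall>p\<in>I. q p = q p0" using p0 by blast
      then have "(\<Sum>p\<in>I. v p * q p) = (\<Sum>p\<in>I. q p0 * v p)"
        by (intro sum.cong) auto
      also have "\<dots> = q p0 * sum v I" by (simp add: sum_distrib_left)
      finally show ?thesis using less.prems by simp
    qed
  next
    case False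
    define T where "T = q ` I"
    have finT: "finite T" using less.prems T_def by auto
    have cT: "card T \<ge> 2" using False T_def by auto
    have neT: "T \<noteq> {}" using cT by auto
    define m where "m = Max T"
    have mT: "m \<in> T" using finT neT m_def by auto
    have ne2: "T - {m} \<noteq> {}"
    proof
      assume "T - {m} = {}"
      then have "T \<subseteq> {m}" by auto
      then have "card T \<le> 1" using card_mono[of "{m}" T] by simp
      with cT show False by simp
    qed
    define m' where "m' = Max (T - {m})"
    have m'T: "m' \<in> T - {m}" unfolding m'_def using finT ne2 by (intro Max_in) auto
    have lem: "\<And>x. x \<in> T \<Longrightarrow> x \<le> m" using finT m_def by auto
    have lem': "\<And>x. x \<in> T - {m} \<Longrightarrow> x \<le> m'" using finT m'_def by auto
    have mm': "m' < m" using m'T lem[of m'] by auto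
    define q' where "q' = (\<lambda>p. if q p = m then m' else q p)"
    have img: "q' ` I = T - {m}"
    proof
      show "q' ` I \<subseteq> T - {m}" using m'T by (auto simp: q'_def T_def)
      show "T - {m} \<subseteq> q' ` I"
      proof
        fix t assume "t \<in> T - {m}"
        then obtain p where "p \<in> I" "t = q p" "q p \<noteq> m" by (auto simp: T_def)
        then show "t \<in> q' ` I" by (auto simp: q'_def)
      qed
    qed
    have cardlt: "card (q' ` I) < n"
      using img mT finT less.prems(3) T_def cT by (simp add: card_Diff_singleton)
    have q'le: "\<And>p. p \<in> I \<Longrightarrow> q' p \<le> m'"
      using lem' by (auto simp: q'_def T_def)
    have sub': "\<forall>t. sum v {p\<in>I. q' p < t} \<le> 0"
    proof
      fix t
      show "sum v {p\<in>I. q' p < t} \<le> 0"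
      proof (cases "t \<le> m'")
        case True
        have "{p\<in>I. q' p < t} = {p\<in>I. q p < t}"
          using True mm' by (auto simp: q'_def)
        then show ?thesis using less.prems(4) by simp
      next
        case False
        have "{p\<in>I. q' p < t} = I" using False q'le by force
        then show ?thesis using less.prems(2) by simp
      qed
    qed
    have IH: "0 \<le> (\<Sum>p\<in>I. v p * q' p)"
      using less.IH[OF cardlt less.prems(1,2) refl sub'] .
    have split: "\<And>p. v p * q p = v p * q' p + (m - m') * (if q p = m then v p else 0)"
      by (auto simp: q'_def algebra_simps)
    have "(\<Sum>p\<in>I. v p * q p) = (\<Sum>p\<in>I. v p * q' p) + (m - m') * (\<Sum>p\<in>I. if q p = m then v p else 0)"
      by (simp add: split sum.distrib sum_distrib_left)
    moreover have "(\<Sum>p\<in>I. if q p = m then v p else 0) = sum v I - sum v {p\<in>I. q p < m}"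
    proof -
      have "I = {p\<in>I. q p = m} \<union> {p\<in>I. q p < m}" using lem T_def by force
      moreover have "sum v ({p\<in>I. q p = m} \<union> {p\<in>I. q p < m}) = sum v {p\<in>I. q p = m} + sum v {p\<in>I. q p < m}"
        using less.prems(1) by (intro sum.union_disjoint) auto
      ultimately have "sum v I = sum v {p\<in>I. q p = m} + sum v {p\<in>I. q p < m}"
        by simp
      moreover have "(\<Sum>p\<in>I. if q p = m then v p else 0) = sum v {p\<in>I. q p = m}"
        using less.prems(1) by (simp add: sum.inter_filter)
      ultimately show ?thesis by simp
    qed
    moreover have "sum v {p\<in>I. q p < m} \<le> 0" using less.prems(4) by simp
    ultimately show ?thesis using IH mm' less.prems(2)
      by (smt (verit) mult_nonneg_nonneg)
  qed
qed

lemma layer: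
  fixes I :: "'a set" and v q :: "'a \<Rightarrow> real"
  assumes "finite I" "sum v I = 0" "\<forall>t. sum v {p\<in>I. q p < t} \<le> 0"
  shows "0 \<le> (\<Sum>p\<in>I. v p * q p)"
  using layer_aux[OF assms(1,2) refl assms(3)] .

lemma finite_idx: "finite (idx d)"
proof -
  have "idx d \<subseteq> {1..d} \<times> {1..d}" by (auto simp: idx_def)
  then show ?thesis by (rule finite_subset) auto
qed

lemma inner_ind:
  assumes "S \<subseteq> idx d"
  shows "innerE d v (\<lambda>p. if p \<in> S then c else 0) = c * sum v S"
proof -
  have "innerE d v (\<lambda>p. if p \<in> S then c else 0) = (\<Sum>p\<in>idx d. if p \<in> S then c * v p else 0)"
    unfolding innerE_def by (intro sum.cong) auto
  also have "\<dots> = (\<Sum>p\<in>idx d \<inter> S. c * v p)" by (simp add: sum.inter_restrict finite_idx)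
  also have "idx d \<inter> S = S" using assms by auto
  finally show ?thesis by (simp add: sum_distrib_left)
qed

lemma ind_vecE: "S \<subseteq> idx d \<Longrightarrow> (\<lambda>p. if p \<in> S then c else 0) \<in> vecE d"
  by (auto simp: vecE_def)

lemma diag:
  assumes "q \<in> Qmin d"
  shows "1 \<le> i \<Longrightarrow> i \<le> j \<Longrightarrow> j \<le> d \<Longrightarrow> q (i, j) = q (1, j + 1 - i)"
proof (induction i arbitrary: j)
  case 0 then show ?case by simp
next
  case (Suc k)
  show ?case
  proof (cases "k = 0")
    case True then show ?thesis by simp
  next
    case False
    have H: "\<forall>i j. 1 \<le> i \<and> i \<le> j \<and> j < d \<longrightarrow> q (i, j) = q (i + 1, j + 1)"
      using assms(1) unfolding Qmin_def by blast
    have "q (k, j - 1) = q (k + 1, j - 1 + 1)"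
    proof -
      have c: "1 \<le> k \<and> k \<le> j - 1 \<and> j - 1 < d" using Suc.prems False by auto
      show ?thesis using H[rule_format, OF c] .
    qed
    moreover have "j - 1 + 1 = j" using Suc.prems by simp
    moreover have "q (k, j - 1) = q (1, j - 1 + 1 - k)" using Suc.IH[of "j - 1"] Suc.prems False by simp
    moreover have "j - 1 + 1 - k = j + 1 - Suc k" using Suc.prems by simp
    ultimately show ?thesis by simp
  qed
qed

lemma row:
  assumes "q \<in> Qmin d" "1 \<le> a" "a + k \<le> d"
  shows "q (1, a + k) \<le> q (1, a)"
  using assms(3)
proof (induction k)
  case 0 then show ?case by simp
next
  case (Suc k)
  have "\<forall>i j. 1 \<le> i \<and> i \<le> j \<and> j < d \<longrightarrow> q (i, j + 1) \<le> q (i, j)"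
    using assms(1) unfolding Qmin_def by blast
  then have "q (1, a + k + 1) \<le> q (1, a + k)"
    using assms(2) Suc.prems by simp
  then show ?case using Suc by simp
qed

lemma cmp:
  assumes "q \<in> Qmin d" "(i, j) \<in> idx d" "(i', j') \<in> idx d" "j - i \<le> j' - i'"
  shows "q (i', j') \<le> q (i, j)"
proof -
  have "q (i, j) = q (1, j + 1 - i)" using diag[OF assms(1)] assms(2) by (auto simp: idx_def)
  moreover have "q (i', j') = q (1, j' + 1 - i')" using diag[OF assms(1)] assms(3) by (auto simp: idx_def)
  moreover have "q (1, (j + 1 - i) + ((j' - i') - (j - i))) \<le> q (1, j + 1 - i)"
    using assms by (intro row) (auto simp: idx_def)
  moreover have "(j + 1 - i) + ((j' - i') - (j - i)) = j' + 1 - i'"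
    using assms by (auto simp: idx_def)
  ultimately show ?thesis by simp
qed

lemma Qmin_sub:
  assumes "q \<in> Qmin d"
  shows "sum v {p\<in>idx d. q p < t} = 0 \<or> (\<exists>s\<in>{1..d}. {p\<in>idx d. q p < t} = idx_s d s)"
proof (cases "{p\<in>idx d. q p < t} = {}")
  case True then show ?thesis by (intro disjI1) (simp only: True sum.empty)
next
  case False
  define S where "S = {p\<in>idx d. q p < t}"
  define K where "K = (\<lambda>(i, j). j - i) ` S"
  have finS: "finite S" using finite_idx S_def by auto
  have "K \<noteq> {}" "finite K" using False finS by (auto simp: K_def S_def)
  then have k0K: "Min K \<in> K" by simp
  define k0 where "k0 = Min K"
  obtain i0 j0 where ij0: "(i0, j0) \<in> S" "j0 - i0 = k0" using k0K k0_def K_def by auto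
  have i0: "(i0, j0) \<in> idx d" "q (i0, j0) < t" using ij0 S_def by auto
  have k0d: "k0 < d" using i0 ij0 by (auto simp: idx_def)
  have "S = idx_s d (d - k0)"
  proof
    show "S \<subseteq> idx_s d (d - k0)"
    proof
      fix p assume pS: "p \<in> S"
      obtain i j where p: "p = (i, j)" by fastforce
      have "j - i \<in> K" using pS p K_def by force
      then have "k0 \<le> j - i" using \<open>finite K\<close> k0_def by simp
      moreover have "(i, j) \<in> idx d" using pS p S_def by auto
      ultimately show "p \<in> idx_s d (d - k0)" using p k0d by (auto simp: idx_s_def idx_def)
    qed
    show "idx_s d (d - k0) \<subseteq> S"
    proof
      fix p assume pI: "p \<in> idx_s d (d - k0)"
      obtain i j where p: "p = (i, j)" by fastforce
      have ij: "(i, j) \<in> idx d" "k0 \<le> j - i" using pI p k0d by (auto simp: idx_s_def idx_def)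
      have "q (i, j) \<le> q (i0, j0)" using cmp[OF assms i0(1) ij(1)] ij ij0 by simp
      then show "p \<in> S" using i0 ij p S_def by auto
    qed
  qed
  moreover have "d - k0 \<in> {1..d}" using k0d by auto
  ultimately show ?thesis using S_def by blast
qed

lemma Qmax_sub:
  assumes "q \<in> Qmax d"
  shows "admissible d {p\<in>idx d. q p < t}"
  unfolding admissible_def
proof (intro conjI allI impI)
  show "{p \<in> idx d. q p < t} \<subseteq> idx d" by auto
next
  fix i j assume A: "(i, j) \<in> {p \<in> idx d. q p < t}" "(i, j + 1) \<in> idx d"
  then have "q (i, j + 1) \<le> q (i, j)" using assms unfolding Qmax_def by (auto simp: idx_def)
  then show "(i, j + 1) \<in> {p \<in> idx d. q p < t}" using A by auto
next
  fix i j assume A: "(i, j) \<in> {p \<in> idx d. q p < t}" "1 \<le> i \<and> 1 \<le> j \<and> (i - 1, j - 1) \<in> idx d"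
  have H: "\<forall>i j. 1 \<le> i \<and> i \<le> j \<and> j < d \<longrightarrow> q (i, j) \<le> q (i + 1, j + 1)"
    using assms(1) unfolding Qmax_def by blast
  have c: "1 \<le> i - 1 \<and> i - 1 \<le> j - 1 \<and> j - 1 < d" using A by (auto simp: idx_def)
  have "q (i - 1, j - 1) \<le> q (i - 1 + 1, j - 1 + 1)" using H[rule_format, OF c] .
  moreover have "i - 1 + 1 = i" "j - 1 + 1 = j" using A by (auto simp: idx_def)
  ultimately show "(i - 1, j - 1) \<in> {p \<in> idx d. q p < t}" using A by auto
qed

lemma adm_Qmax:
  assumes "admissible d J"
  shows "(\<lambda>p. if p \<in> J then -1 else 0) \<in> Qmax d"
proof -
  have J: "J \<subseteq> idx d" using assms admissible_def by auto
  have "\<And>i j. 1 \<le> i \<Longrightarrow> i \<le> j \<Longrightarrow> j < d \<Longrightarrow> (i, j) \<in> J \<Longrightarrow> (i, j + 1) \<in> J"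
    using assms unfolding admissible_def idx_def by auto
  moreover have "\<And>i j. 1 \<le> i \<Longrightarrow> i \<le> j \<Longrightarrow> j < d \<Longrightarrow> (i + 1, j + 1) \<in> J \<Longrightarrow> (i, j) \<in> J"
  proof -
    fix i j assume h: "1 \<le> i" "i \<le> j" "j < d" "(i + 1, j + 1) \<in> J"
    have "(i + 1 - 1, j + 1 - 1) \<in> idx d" using h by (auto simp: idx_def)
    then show "(i, j) \<in> J" using assms h unfolding admissible_def
      by (metis add_diff_cancel_right' le_add2)
  qed
  ultimately show ?thesis using ind_vecE[OF J] unfolding Qmax_def by auto
qed

lemma idxs_Qmin:
  shows "(\<lambda>p. if p \<in> idx_s d s then -1 else 0) \<in> Qmin d"
proof -
  have J: "idx_s d s \<subseteq> idx d" by (auto simp: idx_s_def)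
  show ?thesis using ind_vecE[OF J] unfolding Qmin_def by (auto simp: idx_s_def idx_def)
qed

lemma all_Qmin: "(\<lambda>p. if p \<in> idx d then c else 0) \<in> Qmin d"
  using ind_vecE[of "idx d" d c] unfolding Qmin_def by (auto simp: idx_def)

lemma all_Qmax: "(\<lambda>p. if p \<in> idx d then c else 0) \<in> Qmax d"
  using ind_vecE[of "idx d" d c] unfolding Qmax_def by (auto simp: idx_def)

theorem proposition2p4:
  fixes d :: nat and v :: "nat \<times> nat \<Rightarrow> real"
  assumes "d \<ge> 1" and "v \<in> vecE d"
  shows "(v \<in> dual_cone d (Qmin d) \<longleftrightarrow>
            (\<Sum>p\<in>idx d. v p) = 0 \<and> (\<forall>s\<in>{1..d}. (\<Sum>p\<in>idx_s d s. v p) \<le> 0))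
       \<and> (v \<in> dual_cone d (Qmax d) \<longleftrightarrow>
            (\<Sum>p\<in>idx d. v p) = 0 \<and> (\<forall>J. admissible d J \<longrightarrow> (\<Sum>p\<in>J. v p) \<le> 0))"
proof (rule conjI; rule iffI)
  assume h: "v \<in> dual_cone d (Qmin d)"
  have "0 \<le> innerE d v (\<lambda>p. if p \<in> idx d then 1 else 0)"
       "0 \<le> innerE d v (\<lambda>p. if p \<in> idx d then -1 else 0)"
    using h all_Qmin unfolding dual_cone_def by auto
  moreover have "\<forall>s\<in>{1..d}. (\<Sum>p\<in>idx_s d s. v p) \<le> 0"
  proof
    fix s assume "s \<in> {1..d}"
    have sub: "idx_s d s \<subseteq> idx d" by (auto simp: idx_s_def)
    have "0 \<le> innerE d v (\<lambda>p. if p \<in> idx_s d s then -1 else 0)"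
      using h idxs_Qmin unfolding dual_cone_def by blast
    then show "(\<Sum>p\<in>idx_s d s. v p) \<le> 0" using inner_ind[OF sub, of v "-1"] by simp
  qed
  ultimately show "(\<Sum>p\<in>idx d. v p) = 0 \<and> (\<forall>s\<in>{1..d}. (\<Sum>p\<in>idx_s d s. v p) \<le> 0)"
    using inner_ind[of "idx d" d v 1] inner_ind[of "idx d" d v "-1"] by simp
next
  assume h: "(\<Sum>p\<in>idx d. v p) = 0 \<and> (\<forall>s\<in>{1..d}. (\<Sum>p\<in>idx_s d s. v p) \<le> 0)"
  show "v \<in> dual_cone d (Qmin d)"
    unfolding dual_cone_def
  proof (intro CollectI conjI ballI)
    show "v \<in> vecE d" by (rule assms(2))
    fix q assume q: "q \<in> Qmin d"
    have "\<forall>t. sum v {p\<in>idx d. q p < t} \<le> 0"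
    proof
      fix t show "sum v {p\<in>idx d. q p < t} \<le> 0"
        using Qmin_sub[OF q, of v t] h by auto
    qed
    then show "0 \<le> innerE d v q" unfolding innerE_def using layer finite_idx h by blast
  qed
next
  assume h: "v \<in> dual_cone d (Qmax d)"
  have "0 \<le> innerE d v (\<lambda>p. if p \<in> idx d then 1 else 0)"
       "0 \<le> innerE d v (\<lambda>p. if p \<in> idx d then -1 else 0)"
    using h all_Qmax unfolding dual_cone_def by auto
  moreover have "\<forall>J. admissible d J \<longrightarrow> (\<Sum>p\<in>J. v p) \<le> 0"
  proof (intro allI impI)
    fix J assume J: "admissible d J"
    have "0 \<le> innerE d v (\<lambda>p. if p \<in> J then -1 else 0)"
      using h adm_Qmax[OF J] unfolding dual_cone_def by auto
    then show "(\<Sum>p\<in>J. v p) \<le> 0" using J inner_ind admissible_def by fastforce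
  qed
  ultimately show "(\<Sum>p\<in>idx d. v p) = 0 \<and> (\<forall>J. admissible d J \<longrightarrow> (\<Sum>p\<in>J. v p) \<le> 0)"
    using inner_ind[of "idx d" d v 1] inner_ind[of "idx d" d v "-1"] by simp
next
  assume h: "(\<Sum>p\<in>idx d. v p) = 0 \<and> (\<forall>J. admissible d J \<longrightarrow> (\<Sum>p\<in>J. v p) \<le> 0)"
  show "v \<in> dual_cone d (Qmax d)"
    unfolding dual_cone_def
  proof (intro CollectI conjI ballI)
    show "v \<in> vecE d" by (rule assms(2))
    fix q assume q: "q \<in> Qmax d"
    have "\<forall>t. sum v {p\<in>idx d. q p < t} \<le> 0" using Qmax_sub[OF q] h by auto
    then show "0 \<le> innerE d v q" unfolding innerE_def using layer finite_idx h by blast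
  qed
qed

end
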